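(* Let $\mathbf{W}=\langle W;\to,\neg,{}^{+},{}^{-},1\rangle$ be a quasi-Wajsberg* algebra and $0:=1\to 1$. Then for any $x,y\in W$: (1) $0\to(\neg x)^{+}=0\to\neg x^{-}$ and $0\to(\neg x)^{-}=0\to\neg x^{+}$; (2) $0\to x^{+-}=0=0\to x^{-+}$; (3) $0\to x^{++}=0\to x^{+}$ and $0\to x^{--}=0\to x^{-}$; (4) $(\neg x)^{+}\to y=\neg x^{-}\to y$, $x\to(\neg y)^{+}=x\to\neg y^{-}$, $(\neg x)^{-}\to y=\neg x^{+}\to y$ and $x\to(\neg y)^{-}=x\to\neg y^{+}$; (5) $x^{+-}\to y=0\to y=x^{-+}\to y$ and $x\to y^{+-}=x\to 0=x\to y^{-+}$; (6) $x^{++}\to y=x^{+}\to y$, $x\to y^{++}=x\to y^{+}$, $x^{--}\to y=x^{-}\to y$ and $x\to y^{--}=x\to y^{-}$.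
   Context: A quasi-Wajsberg* algebra is an algebra $\langle W;\to,\neg,{}^{+},{}^{-},1\rangle$ of type $\langle2,1,1,1,0\rangle$ such that for all $x,y,z\in W$: (QW*1) $x\to y=\neg y\to\neg x$; (QW*2) $(x\to 1)\to((y\to 1)\to z)=(y\to 1)\to((x\to 1)\to z)$; (QW*3) $(1\to x)\to 1=1$; (QW*4) $(z\to z)\to(x\to y)=x\to y$; (QW*5) $(1\to 1)\to x^{+}=((1\to 1)\to x)^{+}=(x\to 1)\to 1$ and $(1\to 1)\to x^{-}=((1\to 1)\to x)^{-}=(x\to\neg 1)\to\neg 1$; (QW*6) $x\to y=(y^{+}\to x^{-})\to(x^{+}\to y^{-})$; (QW*7) $\neg(x\to y)=y\to x$; (QW*8) $\neg\neg x=x$; (QW*9) $(x\to(\neg x\to y))^{+}=x^{+}\to(\neg x^{+}\to y^{+})$; (QW*10) $x\vee y=y\vee x$; (QW*11) $x\vee(y\vee z)=(x\vee y)\vee z$; (QW*12) $x\to(y\vee z)=(x\to y)\vee(x\to z)$; where $x\vee y:=((x^{+}\to y^{+})^{+}\to(\neg x)^{-})\to((y^{-}\to x^{-})^{-}\to x^{-})$. Conventions: ${}^+,{}^-$ bind tighter than $\neg$, which binds tighter than $\to$ (so $\neg x^{-}$ means $\neg(x^{-})$); $x^{+-}$ means $(x^{+})^{-}$, etc. *)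

theory Defs
  imports Main
begin

text \<open>Quasi-Wajsberg* algebra on the whole type 'a (carrier = UNIV).
  imp = \<open>\<to>\<close>, neg = \<open>\<not>\<close>, pl = \<open>+\<close>, mi = \<open>-\<close>, one = 1.\<close>

definition qw_join :: "('a \<Rightarrow> 'a \<Rightarrow> 'a) \<Rightarrow> ('a \<Rightarrow> 'a) \<Rightarrow> ('a \<Rightarrow> 'a) \<Rightarrow> ('a \<Rightarrow> 'a) \<Rightarrow> 'a \<Rightarrow> 'a \<Rightarrow> 'a" where
  "qw_join imp neg pl mi x y =
     imp (imp (pl (imp (pl x) (pl y))) (mi (neg x)))
         (imp (mi (imp (mi y) (mi x))) (mi x))"

definition quasi_wajsberg_star ::
  "('a \<Rightarrow> 'a \<Rightarrow> 'a) \<Rightarrow> ('a \<Rightarrow> 'a) \<Rightarrow> ('a \<Rightarrow> 'a) \<Rightarrow> ('a \<Rightarrow> 'a) \<Rightarrow> 'a \<Rightarrow> bool" where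
  "quasi_wajsberg_star imp neg pl mi one \<longleftrightarrow>
     (\<forall>x y. imp x y = imp (neg y) (neg x)) \<and>
     (\<forall>x y z. imp (imp x one) (imp (imp y one) z) = imp (imp y one) (imp (imp x one) z)) \<and>
     (\<forall>x. imp (imp one x) one = one) \<and>
     (\<forall>x y z. imp (imp z z) (imp x y) = imp x y) \<and>
     (\<forall>x. imp (imp one one) (pl x) = pl (imp (imp one one) x) \<and>
          pl (imp (imp one one) x) = imp (imp x one) one) \<and>
     (\<forall>x. imp (imp one one) (mi x) = mi (imp (imp one one) x) \<and>
          mi (imp (imp one one) x) = imp (imp x (neg one)) (neg one)) \<and>
     (\<forall>x y. imp x y = imp (imp (pl y) (mi x)) (imp (pl x) (mi y))) \<and>
     (\<forall>x y. neg (imp x y) = imp y x) \<and>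
     (\<forall>x. neg (neg x) = x) \<and>
     (\<forall>x y. pl (imp x (imp (neg x) y)) = imp (pl x) (imp (neg (pl x)) (pl y))) \<and>
     (\<forall>x y. qw_join imp neg pl mi x y = qw_join imp neg pl mi y x) \<and>
     (\<forall>x y z. qw_join imp neg pl mi x (qw_join imp neg pl mi y z) =
              qw_join imp neg pl mi (qw_join imp neg pl mi x y) z) \<and>
     (\<forall>x y z. imp x (qw_join imp neg pl mi y z) =
              qw_join imp neg pl mi (imp x y) (imp x z))"

end

theory Submission
  imports Defs
begin

locale qw =
  fixes imp :: "'a \<Rightarrow> 'a \<Rightarrow> 'a" and neg pl mi :: "'a \<Rightarrow> 'a" and one :: 'a
  assumes A1: "imp x y = imp (neg y) (neg x)"
  and A2: "imp (imp x one) (imp (imp y one) z) = imp (imp y one) (imp (imp x one) z)"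
  and A3: "imp (imp one x) one = one"
  and A4: "imp (imp z z) (imp x y) = imp x y"
  and A5a: "imp (imp one one) (pl x) = pl (imp (imp one one) x)"
  and A5b: "pl (imp (imp one one) x) = imp (imp x one) one"
  and A5c: "imp (imp one one) (mi x) = mi (imp (imp one one) x)"
  and A5d: "mi (imp (imp one one) x) = imp (imp x (neg one)) (neg one)"
  and A6: "imp x y = imp (imp (pl y) (mi x)) (imp (pl x) (mi y))"
  and A7: "neg (imp x y) = imp y x"
  and A8: "neg (neg x) = x"
  and A9: "pl (imp x (imp (neg x) y)) = imp (pl x) (imp (neg (pl x)) (pl y))"
  and A10: "qw_join imp neg pl mi x y = qw_join imp neg pl mi y x"
  and A11: "qw_join imp neg pl mi x (qw_join imp neg pl mi y z) = qw_join imp neg pl mi (qw_join imp neg pl mi x y) z"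
  and A12: "imp x (qw_join imp neg pl mi y z) = qw_join imp neg pl mi (imp x y) (imp x z)"
begin
lemma Z: "imp z z = imp one one" by (metis A4 A7)
lemma n0: "neg (imp one one) = imp one one" by (metis A7)
lemma o1: "imp (imp one one) one = one" using A3 by metis
lemma zz: "imp (imp one one) (imp one one) = imp one one" using A4 by metis
lemma reg: "imp (imp one one) (imp x y) = imp x y" using A4 by metis
lemma p0: "pl (imp one one) = imp one one" by (metis A3 A5b Z)
lemma m0: "mi (imp one one) = imp one one" by (metis A3 A4 A5d A7)
lemma P1a: "imp (imp one one) (pl (neg x)) = imp (imp one one) (neg (mi x))"
  by (metis A1 A7 A5a A5b A5c A5d)
lemma P1b: "imp (imp one one) (mi (neg x)) = imp (imp one one) (neg (pl x))"
  by (metis A1 A7 A8 P1a)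
lemma J: "qw_join imp neg pl mi x x = imp (imp one one) x"
  unfolding qw_join_def by (metis A1 A5d A6 A7 P1a Z o1)
lemma R: "imp x (imp (imp one one) y) = imp x y"
  by (metis J A12 reg)
lemma L: "imp (imp (imp one one) x) y = imp x y"
  by (metis R A1 A7 n0)
lemma P2a: "imp (imp one one) (mi (pl x)) = imp one one"
  by (metis A5a A5c A5b A7 A5d A3 A2 A1)
lemma P2b: "imp (imp one one) (pl (mi x)) = imp one one"
  by (metis A5a P2a P1a A1 A7)
lemma P3a: "imp (imp one one) (pl (pl x)) = imp (imp one one) (pl x)"
  by (metis A5a A7 A5b A3 A2)
lemma P3b: "imp (imp one one) (mi (mi x)) = imp (imp one one) (mi x)"
  by (metis A4 A5c A6 A7 P1a P2a)
end

theorem proposition3p4: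
  fixes imp :: "'a \<Rightarrow> 'a \<Rightarrow> 'a" and neg pl mi :: "'a \<Rightarrow> 'a" and one :: 'a
  assumes "quasi_wajsberg_star imp neg pl mi one"
  defines "zero \<equiv> imp one one"
  shows
    "(\<forall>x. imp zero (pl (neg x)) = imp zero (neg (mi x)) \<and>
         imp zero (mi (neg x)) = imp zero (neg (pl x))) \<and>
     (\<forall>x. imp zero (mi (pl x)) = zero \<and> zero = imp zero (pl (mi x))) \<and>
     (\<forall>x. imp zero (pl (pl x)) = imp zero (pl x) \<and> imp zero (mi (mi x)) = imp zero (mi x)) \<and>
     (\<forall>x y. imp (pl (neg x)) y = imp (neg (mi x)) y \<and>
           imp x (pl (neg y)) = imp x (neg (mi y)) \<and>
           imp (mi (neg x)) y = imp (neg (pl x)) y \<and>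
           imp x (mi (neg y)) = imp x (neg (pl y))) \<and>
     (\<forall>x y. imp (mi (pl x)) y = imp zero y \<and> imp zero y = imp (pl (mi x)) y \<and>
           imp x (mi (pl y)) = imp x zero \<and> imp x zero = imp x (pl (mi y))) \<and>
     (\<forall>x y. imp (pl (pl x)) y = imp (pl x) y \<and> imp x (pl (pl y)) = imp x (pl y) \<and>
           imp (mi (mi x)) y = imp (mi x) y \<and> imp x (mi (mi y)) = imp x (mi y))"
proof -
  interpret qw imp neg pl mi one
    using assms(1) unfolding quasi_wajsberg_star_def
    by unfold_locales (elim conjE; metis)+
  show ?thesis unfolding zero_def
    by (metis L R P1a P1b P2a P2b P3a P3b)
qed

end
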